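(* Let $K$ be any field, let $L\subset\mathbb{Z}^m$ be a non-zero lattice with $L\cap\mathbb{N}^m=\{\mathbf 0\}$, and let $I_L\subset K[x_1,\ldots,x_m]$ be its lattice ideal. Then $\mathrm{bar}(I_L)\ge\delta(\Gamma_L)_{\{0,1\}}$ and $\mathrm{ara}_{\mathcal{A}}(I_L)\ge\delta(\Gamma_L)_{\Omega}$, where $\Omega=\{0,1,\ldots,\dim\Gamma_L\}$.
   Context: For $\mathbf u\in\mathbb{N}^m$ write $\mathbf x^{\mathbf u}=x_1^{u_1}\cdots x_m^{u_m}$; for $\mathbf u\in\mathbb{Z}^m$, $\mathbf u_\pm\in\mathbb{N}^m$ are its positive and negative parts. $I_L=(\mathbf x^{\mathbf u_+}-\mathbf x^{\mathbf u_-}:\mathbf u\in L)$. $\mathrm{Sat}(L)=\{\mathbf u\in\mathbb{Z}^m:d\mathbf u\in L\text{ for some nonzero }d\in\mathbb{Z}\}$, and $\mathcal{A}=\{\mathbf a_1,\ldots,\mathbf a_m\}\subset\mathbb{Z}^n$ satisfies $\mathrm{Sat}(L)=\ker_{\mathbb{Z}}(\mathcal{A})$. Grade by $\deg_{\mathcal{A}}(x_i)=\mathbf a_i$; a polynomial is $\mathcal{A}$-homogeneous if all its monomials have the same $\mathcal{A}$-degree. $\mathrm{bar}(I_L)$ is the least $s$ such that there are binomials $B_1,\ldots,B_s\in I_L$ with $\mathrm{rad}(I_L)=\mathrm{rad}(B_1,\ldots,B_s)$; $\mathrm{ara}_{\mathcal{A}}(I_L)$ is the least $s$ such that there are $\mathcal{A}$-homogeneous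 $F_1,\ldots,F_s\in I_L$ with $\mathrm{rad}(I_L)=\mathrm{rad}(F_1,\ldots,F_s)$. A monomial $M$ is indispensable of $I_L$ if every system of binomial generators of $I_L$ contains a binomial having $M$ as a monomial. $\mathcal{T}_{\min}$ is the set of inclusion-minimal supports ($\mathrm{supp}(\mathbf x^{\mathbf w})=\{i:w_i\ne0\}$) of indispensable monomials of $I_L$. $\Gamma_L$ is the simplicial complex on vertex set $\mathcal{T}_{\min}$ in which $\{E_1,\ldots,E_k\}$ is a face iff there exist monomials $M_i$ with $\mathrm{supp}(M_i)=E_i$ all of the same $\mathcal{A}$-degree. For a simplicial complex $\mathcal{D}$ with vertex set $\mathcal{V}$ and $J\subseteq\{0,\ldots,\dim\mathcal{D}\}$, a $J$-matching is a set of pairwise disjoint faces of $\mathcal{D}$ each of dimension in $J$; its support is the union of these faces; it is a maximal $J$-matching if its support has the maximum possible cardinality among all $J$-matchings; $\delta(\mathcal{D})_J$ is the minimum number of faces in a maximal $J$-matching. *)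

theory Defs
  imports "HOL-Library.Poly_Mapping" "HOL-Library.Extended_Nat"
begin

(* Variables x_i are indexed by a finite type 'n (so m = CARD('n)). *)

type_synonym ('n, 'k) mpoly = "('n \<Rightarrow>\<^sub>0 nat) \<Rightarrow>\<^sub>0 'k"

definition is_ideal :: "'r::comm_ring_1 set \<Rightarrow> bool" where
  "is_ideal J \<longleftrightarrow> 0 \<in> J \<and> (\<forall>f\<in>J. \<forall>g\<in>J. f + g \<in> J) \<and> (\<forall>f\<in>J. \<forall>r. r * f \<in> J)"

definition ideal_gen :: "'r::comm_ring_1 set \<Rightarrow> 'r set" where
  "ideal_gen S = \<Inter>{J. S \<subseteq> J \<and> is_ideal J}"

definition rad :: "'r::comm_ring_1 set \<Rightarrow> 'r set" where
  "rad J = {f. \<exists>k::nat. f ^ k \<in> J}"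

definition mono :: "('n::finite \<Rightarrow> nat) \<Rightarrow> ('n, 'k::comm_ring_1) mpoly" where
  "mono u = Poly_Mapping.single (Abs_poly_mapping u) 1"

definition monos_of :: "('n::finite, 'k::comm_ring_1) mpoly \<Rightarrow> ('n \<Rightarrow> nat) set" where
  "monos_of F = {u. Abs_poly_mapping u \<in> Poly_Mapping.keys F}"

definition binomial :: "('n::finite, 'k::comm_ring_1) mpoly \<Rightarrow> bool" where
  "binomial B \<longleftrightarrow> (\<exists>u v. B = mono u - mono v)"

definition pos_part :: "('n \<Rightarrow> int) \<Rightarrow> ('n \<Rightarrow> nat)" where
  "pos_part u = (\<lambda>i. nat (u i))"

definition neg_part :: "('n \<Rightarrow> int) \<Rightarrow> ('n \<Rightarrow> nat)" where
  "neg_part u = (\<lambda>i. nat (- u i))"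

definition is_lattice :: "('n \<Rightarrow> int) set \<Rightarrow> bool" where
  "is_lattice L \<longleftrightarrow> (\<lambda>i. 0) \<in> L \<and> (\<forall>u\<in>L. \<forall>v\<in>L. (\<lambda>i. u i + v i) \<in> L) \<and> (\<forall>u\<in>L. (\<lambda>i. - u i) \<in> L)"

definition lattice_ideal :: "('n::finite \<Rightarrow> int) set \<Rightarrow> ('n, 'k::comm_ring_1) mpoly set" where
  "lattice_ideal L = ideal_gen {mono (pos_part u) - mono (neg_part u) | u. u \<in> L}"

definition Sat :: "('n \<Rightarrow> int) set \<Rightarrow> ('n \<Rightarrow> int) set" where
  "Sat L = {u. \<exists>d::int. d \<noteq> 0 \<and> (\<lambda>i. d * u i) \<in> L}"

(* \<A> = {a_1,...,a_m} \<subseteq> \<int>^n given as a map a : 'n \<Rightarrow> ('d \<Rightarrow> int). *)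
definition kerZ :: "('n::finite \<Rightarrow> 'd \<Rightarrow> int) \<Rightarrow> ('n \<Rightarrow> int) set" where
  "kerZ a = {u. \<forall>j. (\<Sum>i\<in>UNIV. u i * a i j) = 0}"

definition Adeg :: "('n::finite \<Rightarrow> 'd \<Rightarrow> int) \<Rightarrow> ('n \<Rightarrow> nat) \<Rightarrow> ('d \<Rightarrow> int)" where
  "Adeg a u = (\<lambda>j. \<Sum>i\<in>UNIV. int (u i) * a i j)"

definition A_homogeneous :: "('n::finite \<Rightarrow> 'd \<Rightarrow> int) \<Rightarrow> ('n, 'k::comm_ring_1) mpoly \<Rightarrow> bool" where
  "A_homogeneous a F \<longleftrightarrow> (\<forall>u\<in>monos_of F. \<forall>v\<in>monos_of F. Adeg a u = Adeg a v)"

section \<open>Arithmetical ranks (as extended naturals; infimum of the empty set is \<infinity>)\<close>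

definition bar :: "('n::finite, 'k::comm_ring_1) mpoly set \<Rightarrow> enat" where
  "bar I = (INF s \<in> {s. \<exists>B::nat \<Rightarrow> ('n, 'k) mpoly.
              (\<forall>i<s. binomial (B i) \<and> B i \<in> I) \<and> rad I = rad (ideal_gen (B ` {..<s}))}. enat s)"

definition araA :: "('n::finite \<Rightarrow> 'd \<Rightarrow> int) \<Rightarrow> ('n, 'k::comm_ring_1) mpoly set \<Rightarrow> enat" where
  "araA a I = (INF s \<in> {s. \<exists>F::nat \<Rightarrow> ('n, 'k) mpoly.
              (\<forall>i<s. A_homogeneous a (F i) \<and> F i \<in> I) \<and> rad I = rad (ideal_gen (F ` {..<s}))}. enat s)"

definition indispensable_monomial :: "('n::finite, 'k::comm_ring_1) mpoly set \<Rightarrow> ('n \<Rightarrow> nat) \<Rightarrow> bool" where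
  "indispensable_monomial I M \<longleftrightarrow>
     (\<forall>G. (\<forall>B\<in>G. binomial B) \<and> ideal_gen G = I \<longrightarrow> (\<exists>B\<in>G. M \<in> monos_of B))"

definition msupp :: "('n \<Rightarrow> nat) \<Rightarrow> 'n set" where
  "msupp u = {i. u i \<noteq> 0}"

definition T_min :: "('n::finite, 'k::comm_ring_1) mpoly set \<Rightarrow> 'n set set" where
  "T_min I = (let T = {msupp M | M. indispensable_monomial I M}
              in {E \<in> T. \<forall>E'\<in>T. E' \<subseteq> E \<longrightarrow> E' = E})"

definition Gamma :: "('n::finite \<Rightarrow> 'd \<Rightarrow> int) \<Rightarrow> ('n, 'k::comm_ring_1) mpoly set \<Rightarrow> 'n set set set" where
  "Gamma a I = {F. F \<noteq> {} \<and> F \<subseteq> T_min I \<and>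
      (\<exists>M::'n set \<Rightarrow> ('n \<Rightarrow> nat). \<exists>d. \<forall>E\<in>F. msupp (M E) = E \<and> Adeg a (M E) = d)}"

section \<open>Matchings in a simplicial complex (given by its set of nonempty faces)\<close>

definition cdim :: "'v set set \<Rightarrow> nat" where
  "cdim D = Max ((\<lambda>F. card F - 1) ` D)"

definition J_matching :: "'v set set \<Rightarrow> nat set \<Rightarrow> 'v set set \<Rightarrow> bool" where
  "J_matching D J Ms \<longleftrightarrow> finite Ms \<and> Ms \<subseteq> D \<and> (\<forall>F\<in>Ms. finite F \<and> F \<noteq> {} \<and> card F - 1 \<in> J)
      \<and> (\<forall>F\<in>Ms. \<forall>G\<in>Ms. F \<noteq> G \<longrightarrow> F \<inter> G = {})"

definition max_J_matching :: "'v set set \<Rightarrow> nat set \<Rightarrow> 'v set set \<Rightarrow> bool" where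
  "max_J_matching D J Ms \<longleftrightarrow> J_matching D J Ms \<and>
      (\<forall>Ms'. J_matching D J Ms' \<longrightarrow> card (\<Union>Ms') \<le> card (\<Union>Ms))"

definition delta :: "'v set set \<Rightarrow> nat set \<Rightarrow> nat" where
  "delta D J = (LEAST k. \<exists>Ms. max_J_matching D J Ms \<and> card Ms = k)"

end

theory Submission
  imports Defs
begin

abbreviation "lkp \<equiv> Poly_Mapping.lookup"
abbreviation "kys \<equiv> Poly_Mapping.keys"
abbreviation "sgl \<equiv> Poly_Mapping.single"

lemma lookup_mult_single_right:
  fixes f :: "('a::cancel_comm_monoid_add) \<Rightarrow>\<^sub>0 ('b::comm_semiring_1)"
  shows "lkp (f * sgl t c) s = Sum_any (\<lambda>l. lkp f l * c when s = l + t)"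
proof -
  have "\<And>l. Sum_any (\<lambda>q. lkp (sgl t c) q when s = l + q) = (c when s = l + t)"
  proof -
    fix l
    have e: "(\<lambda>q. lkp (sgl t c) q when s = l + q) = (\<lambda>q. (c when s = l + q) when t = q)"
      by (rule ext) (auto simp: lookup_single_not_eq when_def)
    show "Sum_any (\<lambda>q. lkp (sgl t c) q when s = l + q) = (c when s = l + t)"
      unfolding e by (rule Sum_any_when_equal')
  qed
  then show ?thesis by (simp add: lookup_mult mult_when)
qed

lemma lookup_mult_single_right1:
  fixes f :: "('a::cancel_comm_monoid_add) \<Rightarrow>\<^sub>0 ('b::comm_semiring_1)"
  shows "lkp (f * sgl t c) (s + t) = lkp f s * c"
proof -
  have "(\<lambda>l. lkp f l * c when s + t = l + t) = (\<lambda>l. lkp f l * c when l = s)"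
    by (rule ext) (auto simp: when_def)
  then show ?thesis by (simp add: lookup_mult_single_right)
qed

lemma lookup_mult_single_right0:
  fixes f :: "('a::cancel_comm_monoid_add) \<Rightarrow>\<^sub>0 ('b::comm_semiring_1)"
  assumes "\<forall>l. s \<noteq> l + t"
  shows "lkp (f * sgl t c) s = 0"
proof -
  have e: "(\<lambda>l. lkp f l * c when s = l + t) = (\<lambda>l. 0)"
    using assms by (auto simp: when_def)
  show ?thesis unfolding lookup_mult_single_right e by simp
qed

lemma lkp_Abs [simp]: "lkp (Abs_poly_mapping (u::'n::finite \<Rightarrow> 'b::zero)) = u"
  by (rule lookup_Abs_poly_mapping) simp

lemma monos_of_iff: "u \<in> monos_of F \<longleftrightarrow> Abs_poly_mapping u \<in> kys F"
  by (simp add: monos_of_def)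

lemma monos_of_eq: "monos_of (F::('n::finite,'k::comm_ring_1) mpoly) = lkp ` kys F"
proof -
  have "u \<in> monos_of F \<longleftrightarrow> u \<in> lkp ` kys F" for u
    by (auto simp: monos_of_def image_iff) (metis lkp_Abs)
  then show ?thesis by blast
qed

lemma msupp_lkp: "msupp (lkp w) = kys w"
  by (auto simp: msupp_def in_keys_iff)

lemma mono_eq: "(mono u :: ('n::finite,'k::comm_ring_1) mpoly) = sgl (Abs_poly_mapping u) 1"
  by (simp add: mono_def)

section \<open>Ideals\<close>

lemma ideal_gen_least: "is_ideal J \<Longrightarrow> S \<subseteq> J \<Longrightarrow> ideal_gen S \<subseteq> J"
  by (auto simp: ideal_gen_def)

lemma ideal_gen_sub: "S \<subseteq> ideal_gen S"
  by (auto simp: ideal_gen_def)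

lemma ideal_gen_ideal: "is_ideal (ideal_gen S)"
  unfolding is_ideal_def ideal_gen_def by blast

lemma ideal_mult: "is_ideal J \<Longrightarrow> f \<in> J \<Longrightarrow> r * f \<in> J"
  by (simp add: is_ideal_def)

lemma ideal_neg: "is_ideal J \<Longrightarrow> (f::'r::comm_ring_1) \<in> J \<Longrightarrow> - f \<in> J"
  using ideal_mult[of J f "-1"] by simp

lemma rad_sub: "J \<subseteq> rad J"
  unfolding rad_def by (auto intro: exI[of _ 1])

section \<open>Divisibility ideal\<close>

lemma div_ideal:
  fixes S :: "('n, 'k::comm_ring_1) mpoly set"
  assumes Q: "\<And>a b. Q (a + b) \<Longrightarrow> Q b"
  shows "ideal_gen S \<subseteq> {P. \<forall>w\<in>kys P. Q w \<longrightarrow> (\<exists>g\<in>S. \<exists>p\<in>kys g. \<exists>c. w = c + p)}"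
proof -
  define J where "J = {P::('n,'k) mpoly. \<forall>w\<in>kys P. Q w \<longrightarrow> (\<exists>g\<in>S. \<exists>p\<in>kys g. \<exists>c. w = c + p)}"
  have "0 \<in> J" by (simp add: J_def)
  moreover have "\<forall>f\<in>J. \<forall>g\<in>J. f + g \<in> J"
  proof (intro ballI)
    fix f g assume "f \<in> J" "g \<in> J"
    then show "f + g \<in> J" using keys_add[of f g] unfolding J_def by blast
  qed
  moreover have "\<forall>f\<in>J. \<forall>r. r * f \<in> J"
  proof (intro ballI allI)
    fix f r assume f: "f \<in> J"
    have "\<exists>g\<in>S. \<exists>p\<in>kys g. \<exists>c. w = c + p" if w: "w \<in> kys (r * f)" and "Q w" for w
    proof -
      from w keys_mult[of r f] obtain a b where ab: "w = a + b" "b \<in> kys f" by blast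
      with \<open>Q w\<close> Q have "Q b" by blast
      with f ab obtain g p c where "g \<in> S" "p \<in> kys g" "b = c + p" unfolding J_def by blast
      then show "\<exists>g\<in>S. \<exists>p\<in>kys g. \<exists>c. w = c + p"
        using ab by (intro bexI[of _ g] bexI[of _ p] exI[of _ "a + c"]) (simp_all add: add.assoc)
    qed
    then show "r * f \<in> J" unfolding J_def by blast
  qed
  ultimately have "is_ideal J" unfolding is_ideal_def by blast
  moreover have "S \<subseteq> J" proof (rule subsetI)
    fix x assume "x \<in> S" then show "x \<in> J" unfolding J_def by (auto intro!: bexI[of _ x] exI[of _ 0])
  qed
  ultimately show ?thesis using ideal_gen_least J_def by blast
qed


section \<open>Class sums\<close>

definition cls :: "('n \<Rightarrow> int) set \<Rightarrow> ('n \<Rightarrow> int) \<Rightarrow> ('n \<Rightarrow>\<^sub>0 nat) \<Rightarrow> bool" where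
  "cls L z w \<longleftrightarrow> (\<lambda>i. int (lkp w i) - z i) \<in> L"

definition csum :: "('n \<Rightarrow> int) set \<Rightarrow> ('n \<Rightarrow> int) \<Rightarrow> ('n, 'k::comm_ring_1) mpoly \<Rightarrow> 'k" where
  "csum L z P = sum (lkp P) {w \<in> kys P. cls L z w}"

lemma csum_superset:
  assumes "finite A" "kys P \<subseteq> A"
  shows "csum L z P = sum (lkp P) {w\<in>A. cls L z w}"
  unfolding csum_def
  by (rule sum.mono_neutral_left) (use assms in \<open>auto simp: in_keys_iff\<close>)

lemma csum_add: "csum L z (P + Q) = csum L z P + csum L z Q"
proof -
  have f: "finite (kys P \<union> kys Q)" by simp
  have "csum L z (P + Q) = sum (lkp (P + Q)) {w\<in>kys P \<union> kys Q. cls L z w}"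
    by (rule csum_superset[OF f keys_add])
  also have "\<dots> = sum (lkp P) {w\<in>kys P \<union> kys Q. cls L z w} + sum (lkp Q) {w\<in>kys P \<union> kys Q. cls L z w}"
    by (simp add: lookup_add sum.distrib)
  also have "\<dots> = csum L z P + csum L z Q"
    using csum_superset[OF f, of P L z] csum_superset[OF f, of Q L z] by auto
  finally show ?thesis .
qed

lemma csum_zero [simp]: "csum L z 0 = 0"
  by (simp add: csum_def)

lemma csum_sum: "finite X \<Longrightarrow> csum L z (sum f X) = (\<Sum>x\<in>X. csum L z (f x))"
  by (induction X rule: finite_induct) (simp_all add: csum_add)

lemma keys_single_mult:
  fixes g :: "('n, 'k::comm_ring_1) mpoly"
  shows "kys (sgl a c * g) \<subseteq> (\<lambda>b. b + a) ` kys g"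
proof
  fix w assume "w \<in> kys (sgl a c * g)"
  with keys_mult[of "sgl a c" g] obtain a' b where "w = a' + b" "a' \<in> kys (sgl a c)" "b \<in> kys g"
    by blast
  then show "w \<in> (\<lambda>b. b + a) ` kys g"
    by (auto split: if_splits simp: add.commute)
qed

lemma cls_shift: "cls L z (b + a) \<longleftrightarrow> cls L (\<lambda>i. z i - int (lkp a i)) b"
proof -
  have "(\<lambda>i. int (lkp (b + a) i) - z i) = (\<lambda>i. int (lkp b i) - (z i - int (lkp a i)))"
    by (rule ext) (simp add: lookup_add)
  then show ?thesis by (simp add: cls_def)
qed

lemma csum_single_mult:
  fixes g :: "('n, 'k::comm_ring_1) mpoly"
  shows "csum L z (sgl a c * g) = c * csum L (\<lambda>i. z i - int (lkp a i)) g"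
proof -
  let ?f = "\<lambda>b. b + a"
  have f: "finite (?f ` kys g)" by simp
  have "csum L z (sgl a c * g) = sum (lkp (sgl a c * g)) {w \<in> ?f ` kys g. cls L z w}"
    by (rule csum_superset[OF f keys_single_mult])
  also have "{w \<in> ?f ` kys g. cls L z w} = ?f ` {b \<in> kys g. cls L z (b + a)}" by auto
  also have "sum (lkp (sgl a c * g)) (?f ` {b \<in> kys g. cls L z (b + a)})
      = sum (\<lambda>b. lkp (sgl a c * g) (b + a)) {b \<in> kys g. cls L z (b + a)}"
    by (rule sum.reindex[unfolded comp_def]) (auto simp: inj_on_def)
  also have "\<dots> = sum (\<lambda>b. lkp g b * c) {b \<in> kys g. cls L (\<lambda>i. z i - int (lkp a i)) b}"
    by (simp add: mult.commute[of "sgl a c"] lookup_mult_single_right1 cls_shift)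
  also have "\<dots> = c * csum L (\<lambda>i. z i - int (lkp a i)) g"
    by (simp add: csum_def sum_distrib_left mult.commute)
  finally show ?thesis .
qed

lemma poly_decomp: "(r::('n, 'k::comm_ring_1) mpoly) = (\<Sum>k\<in>kys r. sgl k (lkp r k))"
proof (rule poly_mapping_eqI)
  fix x
  have "lkp (\<Sum>k\<in>kys r. sgl k (lkp r k)) x = (\<Sum>k\<in>kys r. (lkp r k when k = x))"
    by (simp add: lookup_sum lookup_single)
  also have "\<dots> = lkp r x"
  proof (cases "x \<in> kys r")
    case True
    then show ?thesis by (simp add: when_def sum.delta)
  next
    case False
    then show ?thesis by (auto simp: when_def sum.delta in_keys_iff)
  qed
  finally show "lkp r x = lkp (\<Sum>k\<in>kys r. sgl k (lkp r k)) x" by simp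
qed

lemma csum_mult_zero:
  fixes g :: "('n, 'k::comm_ring_1) mpoly"
  assumes "\<forall>z. csum L z g = 0"
  shows "csum L z (r * g) = 0"
proof -
  have "r * g = (\<Sum>k\<in>kys r. sgl k (lkp r k) * g)"
    by (subst poly_decomp[of r]) (simp add: sum_distrib_right)
  then show ?thesis using assms by (simp add: csum_sum csum_single_mult)
qed

lemma lat_add: "is_lattice L \<Longrightarrow> u \<in> L \<Longrightarrow> v \<in> L \<Longrightarrow> (\<lambda>i. u i + v i) \<in> L"
  by (simp add: is_lattice_def)

lemma lat_neg: "is_lattice L \<Longrightarrow> u \<in> L \<Longrightarrow> (\<lambda>i. - u i) \<in> L"
  by (simp add: is_lattice_def)

lemma lat_zero: "is_lattice L \<Longrightarrow> (\<lambda>i. 0) \<in> L"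
  by (simp add: is_lattice_def)

lemma pos_neg_diff: "int (pos_part v i) - int (neg_part v i) = v i"
  by (simp add: pos_part_def neg_part_def)

lemma csum_gen:
  fixes v :: "'n::finite \<Rightarrow> int"
  assumes L: "is_lattice L" and v: "v \<in> L"
  shows "csum L z (mono (pos_part v) - mono (neg_part v) :: ('n, 'k::comm_ring_1) mpoly) = 0"
proof -
  define p where "p = (Abs_poly_mapping (pos_part v) :: 'n \<Rightarrow>\<^sub>0 nat)"
  define n where "n = (Abs_poly_mapping (neg_part v) :: 'n \<Rightarrow>\<^sub>0 nat)"
  have eq: "(mono (pos_part v) - mono (neg_part v) :: ('n, 'k) mpoly) = sgl p 1 - sgl n 1"
    by (simp add: mono_def p_def n_def)
  have clsiff: "cls L z p \<longleftrightarrow> cls L z n"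
  proof
    assume "cls L z p"
    then have "(\<lambda>i. int (lkp p i) - z i) \<in> L" by (simp add: cls_def)
    from lat_add[OF L this lat_neg[OF L v]]
    have "(\<lambda>i. int (lkp p i) - z i + - v i) \<in> L" .
    moreover have "(\<lambda>i. int (lkp p i) - z i + - v i) = (\<lambda>i. int (lkp n i) - z i)"
      by (rule ext) (simp add: p_def n_def pos_part_def neg_part_def)
    ultimately show "cls L z n" by (simp add: cls_def)
  next
    assume "cls L z n"
    then have "(\<lambda>i. int (lkp n i) - z i) \<in> L" by (simp add: cls_def)
    from lat_add[OF L this v]
    have "(\<lambda>i. int (lkp n i) - z i + v i) \<in> L" .
    moreover have "(\<lambda>i. int (lkp n i) - z i + v i) = (\<lambda>i. int (lkp p i) - z i)"
      by (rule ext) (simp add: p_def n_def pos_part_def neg_part_def)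
    ultimately show "cls L z p" by (simp add: cls_def)
  qed
  show ?thesis
  proof (cases "p = n")
    case True
    then show ?thesis unfolding eq by simp
  next
    case False
    have sub: "kys (sgl p 1 - sgl n (1::'k)) \<subseteq> {p, n}"
      using keys_diff[of "sgl p (1::'k)" "sgl n 1"] by auto
    have "csum L z (sgl p 1 - sgl n (1::'k)) = sum (lkp (sgl p 1 - sgl n (1::'k))) {w\<in>{p,n}. cls L z w}"
      by (rule csum_superset[OF _ sub]) simp
    also have "\<dots> = 0"
    proof (cases "cls L z p")
      case True
      then have e: "{w\<in>{p,n}. cls L z w} = {p, n}" using clsiff by auto
      show ?thesis unfolding e using False
        by (simp add: lookup_minus lookup_single_not_eq lookup_single_not_eq[OF not_sym[OF False]])
    next
      case f2: False
      then have e: "{w\<in>{p,n}. cls L z w} = {}" using clsiff by auto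
      show ?thesis unfolding e by simp
    qed
    finally show ?thesis unfolding eq .
  qed
qed

lemma lattice_ideal_csum:
  assumes L: "is_lattice L"
  shows "lattice_ideal L \<subseteq> {P::('n::finite, 'k::comm_ring_1) mpoly. \<forall>z. csum L z P = 0}"
  unfolding lattice_ideal_def
proof (rule ideal_gen_least)
  show "is_ideal {P::('n, 'k) mpoly. \<forall>z. csum L z P = 0}"
    unfolding is_ideal_def by (auto simp: csum_add csum_mult_zero)
  show "{mono (pos_part u) - mono (neg_part u) |u. u \<in> L} \<subseteq> {P::('n, 'k) mpoly. \<forall>z. csum L z P = 0}"
    using csum_gen[OF L] by blast
qed


section \<open>Partners, binomials and indispensable monomials\<close>

lemma cls_refl: "is_lattice L \<Longrightarrow> cls L (\<lambda>i. int (lkp m i)) m"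
  using lat_zero[of L] by (simp add: cls_def)

lemma partner:
  fixes P :: "('n::finite, 'k::comm_ring_1) mpoly"
  assumes L: "is_lattice L" and P: "P \<in> lattice_ideal L" and m: "m \<in> kys P"
  shows "\<exists>m'\<in>kys P. m' \<noteq> m \<and> cls L (\<lambda>i. int (lkp m i)) m'"
proof (rule ccontr)
  assume "\<not> ?thesis"
  then have e: "{w \<in> kys P. cls L (\<lambda>i. int (lkp m i)) w} = {m}"
    using m cls_refl[OF L, of m] by auto
  have "csum L (\<lambda>i. int (lkp m i)) P = 0" using lattice_ideal_csum[OF L] P by blast
  moreover have "csum L (\<lambda>i. int (lkp m i)) P = lkp P m" unfolding csum_def e by simp
  ultimately show False using m by (simp add: in_keys_iff)
qed

definition inML :: "('n \<Rightarrow> int) set \<Rightarrow> ('n \<Rightarrow>\<^sub>0 nat) \<Rightarrow> bool" where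
  "inML L m \<longleftrightarrow> (\<exists>m'. m' \<noteq> m \<and> cls L (\<lambda>i. int (lkp m i)) m')"

lemma binom_in:
  fixes x y :: "'n::finite \<Rightarrow>\<^sub>0 nat"
  assumes L: "is_lattice L" and c: "cls L (\<lambda>i. int (lkp x i)) y"
  shows "(sgl x 1 - sgl y 1 :: ('n, 'k::comm_ring_1) mpoly) \<in> lattice_ideal L"
proof -
  define v where "v = (\<lambda>i. int (lkp x i) - int (lkp y i))"
  have "(\<lambda>i. int (lkp y i) - int (lkp x i)) \<in> L" using c by (simp add: cls_def)
  from lat_neg[OF L this] have vL: "v \<in> L" by (simp add: v_def)
  define g where "g = (Abs_poly_mapping (\<lambda>i. min (lkp x i) (lkp y i)) :: 'n \<Rightarrow>\<^sub>0 nat)"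
  have ex: "x = g + Abs_poly_mapping (pos_part v)"
    by (rule poly_mapping_eqI) (simp add: lookup_add g_def pos_part_def v_def)
  have ey: "y = g + Abs_poly_mapping (neg_part v)"
    by (rule poly_mapping_eqI) (simp add: lookup_add g_def neg_part_def v_def)
  have "(sgl x 1 - sgl y 1 :: ('n, 'k) mpoly) = sgl g 1 * (mono (pos_part v) - mono (neg_part v))"
    by (subst ex, subst ey) (simp add: mono_def right_diff_distrib mult_single)
  moreover have "(mono (pos_part v) - mono (neg_part v) :: ('n, 'k) mpoly) \<in> lattice_ideal L"
  proof -
    have "(mono (pos_part v) - mono (neg_part v) :: ('n, 'k) mpoly) \<in> {mono (pos_part u) - mono (neg_part u) |u. u \<in> L}"
      using vL by (intro CollectI exI[of _ v]) simp
    then show ?thesis unfolding lattice_ideal_def by (rule subsetD[OF ideal_gen_sub])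
  qed
  ultimately show ?thesis
    using ideal_mult[OF ideal_gen_ideal, of "mono (pos_part v) - mono (neg_part v)" _ "sgl g 1"]
    unfolding lattice_ideal_def by simp
qed

definition deg :: "('n::finite \<Rightarrow>\<^sub>0 nat) \<Rightarrow> nat" where
  "deg w = (\<Sum>i\<in>UNIV. lkp w i)"

lemma deg_add: "deg (a + b) = deg a + deg b"
  by (simp add: deg_def lookup_add sum.distrib)

lemma deg_zero_iff: "deg c = 0 \<longleftrightarrow> c = 0"
proof
  assume "deg c = 0"
  then have "\<forall>i. lkp c i = 0" by (simp add: deg_def)
  then show "c = 0" by (intro poly_mapping_eqI) simp
qed (simp add: deg_def)

lemma indisp_below:
  fixes m :: "'n::finite \<Rightarrow>\<^sub>0 nat"
  assumes L: "is_lattice L" and m: "inML L m"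
  shows "\<exists>M0. indispensable_monomial (lattice_ideal L :: ('n, 'k::comm_ring_1) mpoly set) (lkp M0)
            \<and> (\<exists>c. m = c + M0)"
proof -
  define X where "X = {M0. inML L M0 \<and> (\<exists>c. m = c + M0)}"
  have "m \<in> X" using m by (auto simp: X_def intro: exI[of _ 0])
  from ex_has_least_nat[of "\<lambda>x. x \<in> X", OF this, of deg]
  obtain M0 where M0: "M0 \<in> X" and least: "\<And>y. y \<in> X \<Longrightarrow> deg M0 \<le> deg y" by blast
  have "indispensable_monomial (lattice_ideal L :: ('n, 'k) mpoly set) (lkp M0)"
    unfolding indispensable_monomial_def
  proof (intro allI impI)
    fix G :: "('n, 'k) mpoly set"
    assume G: "(\<forall>B\<in>G. binomial B) \<and> ideal_gen G = lattice_ideal L"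
    from M0 obtain M0' where M0': "M0' \<noteq> M0" "cls L (\<lambda>i. int (lkp M0 i)) M0'"
      by (auto simp: X_def inML_def)
    have inI: "(sgl M0 1 - sgl M0' 1 :: ('n, 'k) mpoly) \<in> ideal_gen G"
      using binom_in[OF L M0'(2)] G by simp
    have key: "M0 \<in> kys (sgl M0 1 - sgl M0' 1 :: ('n, 'k) mpoly)"
      using M0'(1) by (simp add: in_keys_iff lookup_minus lookup_single_not_eq)
    from div_ideal[of "\<lambda>_. True" G] inI key
    obtain g p c where g: "g \<in> G" "p \<in> kys g" "M0 = c + p" by blast
    have gI: "g \<in> lattice_ideal L" using g(1) G ideal_gen_sub by blast
    from partner[OF L gI g(2)] have "inML L p" by (auto simp: inML_def)
    moreover from M0 obtain c0 where "m = c0 + M0" by (auto simp: X_def)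
    ultimately have "p \<in> X" unfolding X_def
    proof (intro CollectI conjI)
      show "\<exists>c'. m = c' + p" using \<open>m = c0 + M0\<close> g(3) by (intro exI[of _ "c0 + c"]) (simp add: add.assoc)
    qed
    then have "deg M0 \<le> deg p" by (rule least)
    then have "c = 0" using g(3) by (simp add: deg_add deg_zero_iff)
    then have "M0 = p" using g(3) by simp
    then show "\<exists>B\<in>G. lkp M0 \<in> monos_of B"
      using g by (auto simp: monos_of_iff)
  qed
  then show ?thesis using M0 by (auto simp: X_def)
qed


lemma T_min_iff:
  "E \<in> T_min I \<longleftrightarrow> (\<exists>M. E = msupp M \<and> indispensable_monomial I M)
     \<and> (\<forall>M. indispensable_monomial I M \<longrightarrow> msupp M \<subseteq> E \<longrightarrow> msupp M = E)"
  unfolding T_min_def Let_def by blast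

lemma tmin_binom:
  fixes L :: "('n::finite \<Rightarrow> int) set"
  assumes L: "is_lattice L" and pos: "\<forall>u\<in>L. (\<forall>i. u i \<ge> 0) \<longrightarrow> u = (\<lambda>i. 0)"
    and E: "E \<in> T_min (lattice_ideal L :: ('n, 'k::comm_ring_1) mpoly set)"
  shows "\<exists>X Y. kys X = E \<and> indispensable_monomial (lattice_ideal L :: ('n, 'k) mpoly set) (lkp X)
     \<and> (sgl X 1 - sgl Y 1 :: ('n, 'k) mpoly) \<in> lattice_ideal L \<and> (\<exists>i. lkp Y i > 0 \<and> lkp X i = 0)"
proof -
  from E obtain M where EM: "E = msupp M" and M: "indispensable_monomial (lattice_ideal L :: ('n, 'k) mpoly set) M"
    unfolding T_min_iff by blast
  define X where "X = (Abs_poly_mapping M :: 'n \<Rightarrow>\<^sub>0 nat)"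
  have lX: "lkp X = M" by (simp add: X_def)
  have kX: "kys X = E" using EM lX msupp_lkp[of X] by simp
  define G0 where "G0 = {mono (pos_part u) - mono (neg_part u) :: ('n, 'k) mpoly |u. u \<in> L}"
  have "\<forall>B\<in>G0. binomial B" unfolding G0_def binomial_def by auto
  moreover have G0I: "ideal_gen G0 = lattice_ideal L" by (simp add: G0_def lattice_ideal_def)
  ultimately obtain B where B: "B \<in> G0" "M \<in> monos_of B"
    using M unfolding indispensable_monomial_def by blast
  from B(1) obtain v where v: "v \<in> L" "B = mono (pos_part v) - mono (neg_part v)" unfolding G0_def by auto
  define p where "p = (Abs_poly_mapping (pos_part v) :: 'n \<Rightarrow>\<^sub>0 nat)"
  define n where "n = (Abs_poly_mapping (neg_part v) :: 'n \<Rightarrow>\<^sub>0 nat)"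
  have Beq: "B = sgl p 1 - sgl n 1" using v(2) by (simp add: mono_def p_def n_def)
  have BI: "B \<in> lattice_ideal L"
    using B(1) ideal_gen_sub[of G0] G0I by auto
  have XB: "X \<in> kys B" using B(2) by (simp add: monos_of_iff X_def)
  have pn: "p \<noteq> n" using XB Beq by auto
  have "X = p \<or> X = n" using XB Beq keys_diff[of "sgl p (1::'k)" "sgl n 1"] by (auto split: if_splits)
  then show ?thesis
  proof
    assume Xp: "X = p"
    have "\<exists>i. lkp n i > 0 \<and> lkp p i = 0"
    proof (rule ccontr)
      assume "\<not> ?thesis"
      then have "\<forall>i. v i \<ge> 0" by (auto simp: p_def n_def pos_part_def neg_part_def not_less)
      then have "v = (\<lambda>i. 0)" using bspec[OF pos v(1)] by simp
      then show False using pn by (simp add: p_def n_def pos_part_def neg_part_def)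
    qed
    then show ?thesis using kX M lX BI Beq Xp by blast
  next
    assume Xn: "X = n"
    have "\<exists>i. lkp p i > 0 \<and> lkp n i = 0"
    proof (rule ccontr)
      assume "\<not> ?thesis"
      then have "\<forall>i. - v i \<ge> 0" by (auto simp: p_def n_def pos_part_def neg_part_def not_less)
      then have "(\<lambda>i. - v i) = (\<lambda>i. 0)" using bspec[OF pos lat_neg[OF L v(1)]] by simp
      then have "v = (\<lambda>i. 0)" by (metis add.inverse_neutral minus_minus)
      then show False using pn by (simp add: p_def n_def pos_part_def neg_part_def)
    qed
    moreover have "(sgl n 1 - sgl p 1 :: ('n, 'k) mpoly) \<in> lattice_ideal L"
      using ideal_neg[OF ideal_gen_ideal BI[unfolded lattice_ideal_def]] Beq
      unfolding lattice_ideal_def by simp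
    ultimately show ?thesis using kX M lX Xn by blast
  qed
qed

lemma pow_coeff:
  fixes X Y :: "'n::finite \<Rightarrow>\<^sub>0 nat"
  assumes "\<exists>i. lkp Y i > 0 \<and> lkp X i = 0"
  shows "lkp ((sgl X 1 - sgl Y 1 :: ('n, 'k::comm_ring_1) mpoly) ^ k) (Abs_poly_mapping (\<lambda>i. k * lkp X i)) = 1"
proof (induction k)
  case 0
  have "Abs_poly_mapping (\<lambda>i. 0 * lkp X i) = (0 :: 'n \<Rightarrow>\<^sub>0 nat)" by simp
  then show ?case by simp
next
  case (Suc k)
  let ?D = "(sgl X 1 - sgl Y 1 :: ('n, 'k) mpoly)"
  have e: "Abs_poly_mapping (\<lambda>i. Suc k * lkp X i) = Abs_poly_mapping (\<lambda>i. k * lkp X i) + X"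
    by (rule poly_mapping_eqI) (simp add: lookup_add)
  have "?D ^ Suc k = ?D ^ k * sgl X 1 - ?D ^ k * sgl Y 1"
    by (simp only: power_Suc2 right_diff_distrib)
  moreover have "lkp (?D ^ k * sgl X 1) (Abs_poly_mapping (\<lambda>i. k * lkp X i) + X) = 1"
    using Suc by (simp add: lookup_mult_single_right1)
  moreover have "lkp (?D ^ k * sgl Y 1) (Abs_poly_mapping (\<lambda>i. k * lkp X i) + X) = 0"
  proof (rule lookup_mult_single_right0, rule allI)
    fix l
    from assms obtain i where i: "lkp Y i > 0" "lkp X i = 0" by blast
    have "lkp (Abs_poly_mapping (\<lambda>i. k * lkp X i) + X) i = 0" using i by (simp add: lookup_add)
    moreover have "lkp (l + Y) i > 0" using i by (simp add: lookup_add)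
    ultimately show "Abs_poly_mapping (\<lambda>i. k * lkp X i) + X \<noteq> l + Y" by auto
  qed
  ultimately show ?case unfolding e by (simp add: lookup_minus)
qed

lemma key:
  fixes L :: "('n::finite \<Rightarrow> int) set" and F :: "nat \<Rightarrow> ('n, 'k::comm_ring_1) mpoly"
  assumes L: "is_lattice L" and pos: "\<forall>u\<in>L. (\<forall>i. u i \<ge> 0) \<longrightarrow> u = (\<lambda>i. 0)"
    and E: "E \<in> T_min (lattice_ideal L :: ('n, 'k) mpoly set)"
    and FI: "\<forall>i<s. F i \<in> lattice_ideal L"
    and R: "rad (lattice_ideal L) = rad (ideal_gen (F ` {..<s}))"
  shows "\<exists>i<s. \<exists>m\<in>monos_of (F i). msupp m = E"
proof -
  obtain X Y where XY: "kys X = E" "indispensable_monomial (lattice_ideal L :: ('n, 'k) mpoly set) (lkp X)"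
    "(sgl X 1 - sgl Y 1 :: ('n, 'k) mpoly) \<in> lattice_ideal L" "\<exists>i. lkp Y i > 0 \<and> lkp X i = 0"
    using tmin_binom[OF L pos E] by blast
  let ?D = "(sgl X 1 - sgl Y 1 :: ('n, 'k) mpoly)"
  have "?D \<in> rad (ideal_gen (F ` {..<s}))" using XY(3) R rad_sub by blast
  then obtain k where k: "?D ^ k \<in> ideal_gen (F ` {..<s})" unfolding rad_def by blast
  define kX where "kX = (Abs_poly_mapping (\<lambda>i. k * lkp X i) :: 'n \<Rightarrow>\<^sub>0 nat)"
  have kXin: "kX \<in> kys (?D ^ k)"
    using pow_coeff[OF XY(4), of k, where 'k='k] by (simp add: kX_def in_keys_iff)
  define Q where "Q = (\<lambda>w::'n \<Rightarrow>\<^sub>0 nat. \<forall>i. lkp X i = 0 \<longrightarrow> lkp w i = 0)"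
  have Q: "Q (a + b) \<Longrightarrow> Q b" for a b by (simp add: Q_def lookup_add)
  have "Q kX" by (simp add: Q_def kX_def)
  have DI: "ideal_gen (F ` {..<s}) \<subseteq> {P. \<forall>w\<in>kys P. Q w \<longrightarrow> (\<exists>g\<in>F ` {..<s}. \<exists>p\<in>kys g. \<exists>c. w = c + p)}"
    by (rule div_ideal) (rule Q)
  from DI k kXin \<open>Q kX\<close>
  obtain i p c where i: "i < s" "p \<in> kys (F i)" "kX = c + p" by blast
  have sub: "kys p \<subseteq> E"
  proof
    fix j assume "j \<in> kys p"
    then have "lkp kX j \<noteq> 0" using i(3) by (simp add: lookup_add in_keys_iff)
    then show "j \<in> E" using XY(1) by (auto simp: kX_def in_keys_iff)
  qed
  show ?thesis
  proof (cases "kys p = E")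
    case True
    then show ?thesis using i by (intro exI[of _ i]) (auto simp: monos_of_iff msupp_lkp intro!: bexI[of _ "lkp p"])
  next
    case False
    have "F i \<in> lattice_ideal L" using FI i(1) by blast
    from partner[OF L this i(2)] have "inML L p" by (auto simp: inML_def)
    from indisp_below[OF L this] obtain M0 c' where M0:
      "indispensable_monomial (lattice_ideal L :: ('n, 'k) mpoly set) (lkp M0)" "p = c' + M0" by blast
    have "kys M0 \<subseteq> kys p" using M0(2) by (auto simp: in_keys_iff lookup_add)
    then have "msupp (lkp M0) \<subseteq> E" using sub by (simp add: msupp_lkp)
    then have "msupp (lkp M0) = E" using E M0(1) unfolding T_min_iff by blast
    then show ?thesis using False sub \<open>kys M0 \<subseteq> kys p\<close> by (simp add: msupp_lkp)
  qed
qed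


section \<open>Combinatorics\<close>

lemma monos_binomial:
  "monos_of (mono u - mono v :: ('n::finite, 'k::comm_ring_1) mpoly) \<subseteq> {u, v}"
proof
  fix w assume "w \<in> monos_of (mono u - mono v :: ('n, 'k) mpoly)"
  then have "Abs_poly_mapping w \<in> kys (sgl (Abs_poly_mapping u) 1 - sgl (Abs_poly_mapping v) (1::'k))"
    by (simp add: monos_of_iff mono_def)
  then have "Abs_poly_mapping w = Abs_poly_mapping u \<or> Abs_poly_mapping w = Abs_poly_mapping v"
    using keys_diff[of "sgl (Abs_poly_mapping u) (1::'k)" "sgl (Abs_poly_mapping v) 1"]
    by (auto split: if_splits)
  then show "w \<in> {u, v}" by (metis insertCI lkp_Abs)
qed

lemma binom_homog:
  fixes L :: "('n::finite \<Rightarrow> int) set" and a :: "'n \<Rightarrow> ('d::finite \<Rightarrow> int)"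
  assumes L: "is_lattice L" and S: "Sat L = kerZ a"
    and B: "binomial (B :: ('n, 'k::comm_ring_1) mpoly)" "B \<in> lattice_ideal L"
  shows "A_homogeneous a B"
proof -
  from B(1) obtain u v where Bq: "B = mono u - mono v" by (auto simp: binomial_def)
  show ?thesis
  proof (cases "u = v")
    case True
    then have "monos_of B = {}" using Bq by (simp add: monos_of_def)
    then show ?thesis by (simp add: A_homogeneous_def)
  next
    case False
    have ne: "Abs_poly_mapping u \<noteq> Abs_poly_mapping v" using False by (metis lkp_Abs)
    have Beq: "B = sgl (Abs_poly_mapping u) 1 - sgl (Abs_poly_mapping v) 1" using Bq by (simp add: mono_def)
    have uk: "Abs_poly_mapping u \<in> kys B"
      using ne by (simp add: Beq in_keys_iff lookup_minus lookup_single_not_eq)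
    from partner[OF L B(2) uk] obtain m' where m': "m' \<in> kys B" "m' \<noteq> Abs_poly_mapping u"
      "cls L (\<lambda>i. int (lkp (Abs_poly_mapping u) i)) m'" by blast
    have "m' = Abs_poly_mapping v"
      using m'(1,2) keys_diff[of "sgl (Abs_poly_mapping u) (1::'k)" "sgl (Abs_poly_mapping v) 1"]
      unfolding Beq by (auto split: if_splits)
    with m'(3) have vuL: "(\<lambda>i. int (v i) - int (u i)) \<in> L" by (simp add: cls_def)
    then have "(\<lambda>i. int (v i) - int (u i)) \<in> Sat L"
      unfolding Sat_def by (intro CollectI exI[of _ 1]) simp
    then have ker: "\<forall>j. (\<Sum>i\<in>UNIV. (int (v i) - int (u i)) * a i j) = 0"
      using S by (simp add: kerZ_def)
    have uv: "Adeg a u = Adeg a v"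
    proof
      fix j
      have "(\<Sum>i\<in>UNIV. int (v i) * a i j) - (\<Sum>i\<in>UNIV. int (u i) * a i j) = 0"
        using ker by (simp add: sum_subtractf[symmetric] left_diff_distrib)
      then show "Adeg a u j = Adeg a v j" by (simp add: Adeg_def)
    qed
    have "monos_of B \<subseteq> {u, v}" using Bq monos_binomial by metis
    then show ?thesis using uv unfolding A_homogeneous_def by (metis insert_iff singletonD subsetD)
  qed
qed

definition Sset :: "('n::finite, 'k::comm_ring_1) mpoly set \<Rightarrow> ('n, 'k) mpoly \<Rightarrow> 'n set set" where
  "Sset I P = {E \<in> T_min I. \<exists>m\<in>monos_of P. msupp m = E}"

lemma finite_T_min: "finite (T_min (I :: ('n::finite, 'k::comm_ring_1) mpoly set))"
  by (rule finite_subset[of _ UNIV]) simp_all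

lemma face:
  assumes H: "A_homogeneous a P" and X: "X \<noteq> {}" "X \<subseteq> Sset I P"
  shows "X \<in> Gamma a I"
proof -
  define M where "M = (\<lambda>E. SOME m. m \<in> monos_of P \<and> msupp m = E)"
  have M: "M E \<in> monos_of P \<and> msupp (M E) = E" if "E \<in> X" for E
  proof -
    from that X(2) have "\<exists>m. m \<in> monos_of P \<and> msupp m = E" by (auto simp: Sset_def)
    then show ?thesis unfolding M_def by (rule someI_ex)
  qed
  from X(1) obtain E0 where E0: "E0 \<in> X" by blast
  have "\<forall>E\<in>X. msupp (M E) = E \<and> Adeg a (M E) = Adeg a (M E0)"
    using M E0 H unfolding A_homogeneous_def by blast
  moreover have "X \<subseteq> T_min I" using X(2) by (auto simp: Sset_def)
  ultimately show ?thesis unfolding Gamma_def using X(1) by blast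
qed

lemma finite_Gamma: "finite (Gamma a (I :: ('n::finite, 'k::comm_ring_1) mpoly set))"
  by (rule finite_subset[of _ "Pow (T_min I)"]) (auto simp: Gamma_def finite_T_min)

lemma main:
  fixes L :: "('n::finite \<Rightarrow> int) set" and F :: "nat \<Rightarrow> ('n, 'k::comm_ring_1) mpoly"
    and a :: "'n \<Rightarrow> ('d::finite \<Rightarrow> int)" and J :: "nat set"
  assumes L: "is_lattice L" and pos: "\<forall>u\<in>L. (\<forall>i. u i \<ge> 0) \<longrightarrow> u = (\<lambda>i. 0)"
    and FI: "\<forall>i<s. F i \<in> lattice_ideal L \<and> A_homogeneous a (F i)"
    and R: "rad (lattice_ideal L) = rad (ideal_gen (F ` {..<s}))"
    and hJ: "\<forall>i<s. \<forall>X. X \<noteq> {} \<longrightarrow> X \<subseteq> Sset (lattice_ideal L) (F i) \<longrightarrow> card X - 1 \<in> J"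
  shows "delta (Gamma a (lattice_ideal L :: ('n, 'k) mpoly set)) J \<le> s"
proof -
  let ?I = "lattice_ideal L :: ('n, 'k) mpoly set"
  let ?T = "T_min ?I"
  let ?S = "\<lambda>i. Sset ?I (F i)"
  have cover: "\<exists>i<s. E \<in> ?S i" if "E \<in> ?T" for E
  proof -
    have "\<exists>i<s. \<exists>m\<in>monos_of (F i). msupp m = E"
      by (rule key[OF L pos that]) (use FI R in auto)
    then show ?thesis using that unfolding Sset_def by auto
  qed
  define D where "D = (\<lambda>i. ?S i - \<Union>(?S ` {..<i}))"
  define Ms where "Ms = D ` {..<s} - {{}}"
  have finMs: "finite Ms" by (simp add: Ms_def)
  have cardMs: "card Ms \<le> s"
  proof -
    have "card Ms \<le> card (D ` {..<s})" by (rule card_mono) (auto simp: Ms_def)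
    also have "\<dots> \<le> card {..<s}" by (rule card_image_le) simp
    finally show ?thesis by simp
  qed
  have DS: "D i \<subseteq> ?S i" for i by (auto simp: D_def)
  have ST: "?S i \<subseteq> ?T" for i by (auto simp: Sset_def)
  have disj: "D i \<inter> D j = {}" if "i \<noteq> j" for i j
  proof (cases "i < j")
    case True
    then show ?thesis by (auto simp: D_def)
  next
    case False
    with that have "j < i" by simp
    then show ?thesis by (auto simp: D_def)
  qed
  have match: "J_matching (Gamma a ?I) J Ms"
    unfolding J_matching_def
  proof (intro conjI ballI impI finMs)
    show "Ms \<subseteq> Gamma a ?I"
    proof
      fix X assume "X \<in> Ms"
      then obtain i where i: "i < s" "X = D i" "X \<noteq> {}" by (auto simp: Ms_def)
      have H: "A_homogeneous a (F i)" using FI i(1) by blast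
      have "X \<subseteq> ?S i" using DS i(2) by simp
      then show "X \<in> Gamma a ?I" by (rule face[OF H i(3)])
    qed
  next
    fix X assume "X \<in> Ms"
    then obtain i where i: "i < s" "X = D i" "X \<noteq> {}" by (auto simp: Ms_def)
    show "finite X" using i DS ST finite_T_min[of ?I] by (meson finite_subset subset_trans)
    show "X \<noteq> {}" by (rule i(3))
    have sub: "X \<subseteq> ?S i" using DS i(2) by simp
    show "card X - 1 \<in> J" using hJ[rule_format, OF i(1) i(3) sub] .
  next
    fix X Y assume "X \<in> Ms" "Y \<in> Ms" "X \<noteq> Y"
    then obtain i j where "X = D i" "Y = D j" by (auto simp: Ms_def)
    with \<open>X \<noteq> Y\<close> have "i \<noteq> j" by auto
    with \<open>X = D i\<close> \<open>Y = D j\<close> disj show "X \<inter> Y = {}" by simp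
  qed
  have unionT: "\<Union>Ms = ?T"
  proof
    show "\<Union>Ms \<subseteq> ?T" using DS ST by (auto simp: Ms_def)
  next
    show "?T \<subseteq> \<Union>Ms"
    proof
      fix E assume E: "E \<in> ?T"
      define i where "i = (LEAST i. i < s \<and> E \<in> ?S i)"
      from cover[OF E] have i: "i < s \<and> E \<in> ?S i" unfolding i_def by (rule LeastI_ex)
      have "E \<notin> ?S j" if "j < i" for j
        using not_less_Least[OF that[unfolded i_def]] i that by auto
      then have "E \<in> D i" using i by (auto simp: D_def)
      then show "E \<in> \<Union>Ms" using i by (auto simp: Ms_def)
    qed
  qed
  have "max_J_matching (Gamma a ?I) J Ms"
    unfolding max_J_matching_def
  proof (intro conjI allI impI match)
    fix Ms' assume "J_matching (Gamma a ?I) J Ms'"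
    then have "Ms' \<subseteq> Gamma a ?I" by (simp add: J_matching_def)
    then have "\<Union>Ms' \<subseteq> ?T" unfolding Gamma_def by blast
    then show "card (\<Union>Ms') \<le> card (\<Union>Ms)" unfolding unionT by (rule card_mono[OF finite_T_min])
  qed
  then have "delta (Gamma a ?I) J \<le> card Ms"
    unfolding delta_def by (intro Least_le) blast
  with cardMs show ?thesis by simp
qed


theorem theorem2p13:
  fixes L :: "('n::finite \<Rightarrow> int) set"
    and a :: "'n \<Rightarrow> ('d::finite \<Rightarrow> int)"
  assumes "is_lattice L"
    and "L \<noteq> {(\<lambda>i. 0)}"
    and "\<forall>u\<in>L. (\<forall>i. u i \<ge> 0) \<longrightarrow> u = (\<lambda>i. 0)"
    and "Sat L = kerZ a"
  shows "bar (lattice_ideal L :: ('n, 'k::field) mpoly set)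
           \<ge> enat (delta (Gamma a (lattice_ideal L :: ('n, 'k) mpoly set)) {0, 1})
       \<and> araA a (lattice_ideal L :: ('n, 'k) mpoly set)
           \<ge> enat (delta (Gamma a (lattice_ideal L :: ('n, 'k) mpoly set))
                  {0..cdim (Gamma a (lattice_ideal L :: ('n, 'k) mpoly set))})"
proof
  let ?I = "lattice_ideal L :: ('n, 'k) mpoly set"
  let ?G = "Gamma a ?I"
  show "enat (delta ?G {0, 1}) \<le> bar ?I"
    unfolding bar_def
  proof (rule INF_greatest)
    fix s assume "s \<in> {s. \<exists>B::nat \<Rightarrow> ('n, 'k) mpoly.
              (\<forall>i<s. binomial (B i) \<and> B i \<in> ?I) \<and> rad ?I = rad (ideal_gen (B ` {..<s}))}"
    then obtain B :: "nat \<Rightarrow> ('n, 'k) mpoly" where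
      B: "\<forall>i<s. binomial (B i) \<and> B i \<in> ?I" "rad ?I = rad (ideal_gen (B ` {..<s}))" by blast
    have "delta ?G {0, 1} \<le> s"
    proof (rule main[OF assms(1) assms(3)])
      show "\<forall>i<s. B i \<in> ?I \<and> A_homogeneous a (B i)"
      proof (intro allI impI conjI)
        fix i assume i: "i < s"
        show "B i \<in> ?I" using B(1) i by simp
        show "A_homogeneous a (B i)" by (rule binom_homog[OF assms(1) assms(4)]) (use B(1) i in simp_all)
      qed
      show "rad ?I = rad (ideal_gen (B ` {..<s}))" by (rule B(2))
      show "\<forall>i<s. \<forall>X. X \<noteq> {} \<longrightarrow> X \<subseteq> Sset ?I (B i) \<longrightarrow> card X - 1 \<in> {0, 1}"
      proof (intro allI impI)
        fix i X assume i: "i < s" and X: "X \<noteq> {}" "X \<subseteq> Sset ?I (B i)"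
        from B(1) i obtain u v where uv: "B i = mono u - mono v" by (auto simp: binomial_def)
        have "X \<subseteq> msupp ` {u, v}"
        proof
          fix E assume "E \<in> X"
          then obtain m where "m \<in> monos_of (B i)" "msupp m = E" using X(2) by (auto simp: Sset_def)
          moreover have "monos_of (B i) \<subseteq> {u, v}" unfolding uv by (rule monos_binomial)
          ultimately show "E \<in> msupp ` {u, v}" by auto
        qed
        then have "card X \<le> card (msupp ` {u, v})" by (rule card_mono[rotated]) simp
        also have "\<dots> \<le> card {u, v}" by (rule card_image_le) simp
        also have "\<dots> \<le> 2" by (simp add: card_insert_if)
        finally have "card X \<le> 2" .
        moreover have "finite X" using \<open>X \<subseteq> msupp ` {u, v}\<close> by (rule finite_subset) simp
        then have "card X \<ge> 1" using X(1) by (simp add: Suc_le_eq card_gt_0_iff)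
        ultimately show "card X - 1 \<in> {0, 1}" by auto
      qed
    qed
    then show "enat (delta ?G {0, 1}) \<le> enat s" by simp
  qed
next
  let ?I = "lattice_ideal L :: ('n, 'k) mpoly set"
  let ?G = "Gamma a ?I"
  show "enat (delta ?G {0..cdim ?G}) \<le> araA a ?I"
    unfolding araA_def
  proof (rule INF_greatest)
    fix s assume "s \<in> {s. \<exists>F::nat \<Rightarrow> ('n, 'k) mpoly.
              (\<forall>i<s. A_homogeneous a (F i) \<and> F i \<in> ?I) \<and> rad ?I = rad (ideal_gen (F ` {..<s}))}"
    then obtain F :: "nat \<Rightarrow> ('n, 'k) mpoly" where
      F: "\<forall>i<s. A_homogeneous a (F i) \<and> F i \<in> ?I" "rad ?I = rad (ideal_gen (F ` {..<s}))" by blast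
    have "delta ?G {0..cdim ?G} \<le> s"
    proof (rule main[OF assms(1) assms(3)])
      show "\<forall>i<s. F i \<in> ?I \<and> A_homogeneous a (F i)" using F(1) by simp
      show "rad ?I = rad (ideal_gen (F ` {..<s}))" by (rule F(2))
      show "\<forall>i<s. \<forall>X. X \<noteq> {} \<longrightarrow> X \<subseteq> Sset ?I (F i) \<longrightarrow> card X - 1 \<in> {0..cdim ?G}"
      proof (intro allI impI)
        fix i X assume i: "i < s" and X: "X \<noteq> {}" "X \<subseteq> Sset ?I (F i)"
        have H: "A_homogeneous a (F i)" using F(1) i by simp
        have XG: "X \<in> ?G" by (rule face[OF H X])
        have "card X - 1 \<le> cdim ?G"
          unfolding cdim_def by (rule Max_ge) (use finite_Gamma XG in auto)
        then show "card X - 1 \<in> {0..cdim ?G}" by simp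
      qed
    qed
    then show "enat (delta ?G {0..cdim ?G}) \<le> enat s" by simp
  qed
qed

end
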